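(* Let $\phi:V\to V$ be a continuous coherency preserver. Assume that $\phi$ is constant on some coherent line, i.e. on some line $a+\mathbb{R}x$ with $a\in V$ and $x\in V\setminus\{0\}$, $q(x)=0$. Then $\phi$ is degenerate.
   Context: Fix an integer $n\ge4$, let $V=\mathbb{R}^n$ with its standard topology and $q(x_1,\dots,x_n)=x_n^2-\sum_{k=1}^{n-1}x_k^2$. Points $x,y$ are coherent when $q(x-y)=0$. For $a\in V$, $\mathcal{C}(a)=\{m\in V: q(m-a)=0\}$. A coherency preserver is a map $\phi:V\to V$ such that $q(b-a)=0$ implies $q(\phi(b)-\phi(a))=0$; it is degenerate when its range is included in $\mathcal{C}(c)$ for some $c\in V$. *)

theory Defs
  imports "HOL-Analysis.Analysis"
begin

text \<open>V = R^n realised as real^'n, where the index type 'n is finite and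
  well-ordered; the coordinates are x_1,...,x_n in the order of 'n, so x_n is the
  coordinate at the greatest index.\<close>

definition last_idx :: "'n::{finite,wellorder}" where
  "last_idx = (GREATEST i. True)"

definition q :: "real ^ 'n::{finite,wellorder} \<Rightarrow> real" where
  "q x = (x $ last_idx)^2 - (\<Sum>k\<in>UNIV - {last_idx}. (x $ k)^2)"

definition coherent :: "real ^ 'n::{finite,wellorder} \<Rightarrow> real ^ 'n::{finite,wellorder} \<Rightarrow> bool" where
  "coherent x y \<longleftrightarrow> q (x - y) = 0"

definition lightcone :: "real ^ 'n::{finite,wellorder} \<Rightarrow> (real ^ 'n::{finite,wellorder}) set" where
  "lightcone a = {m. q (m - a) = 0}"

definition coherency_preserver :: "(real ^ 'n::{finite,wellorder} \<Rightarrow> real ^ 'n::{finite,wellorder}) \<Rightarrow> bool" where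
  "coherency_preserver \<phi> \<longleftrightarrow> (\<forall>a b. q (b - a) = 0 \<longrightarrow> q (\<phi> b - \<phi> a) = 0)"

definition degenerate :: "(real ^ 'n::{finite,wellorder} \<Rightarrow> real ^ 'n::{finite,wellorder}) \<Rightarrow> bool" where
  "degenerate \<phi> \<longleftrightarrow> (\<exists>c. range \<phi> \<subseteq> lightcone c)"

end

theory Submission
  imports Defs
begin

definition bet :: "real ^ 'n::{finite,wellorder} \<Rightarrow> real ^ 'n::{finite,wellorder} \<Rightarrow> real" where
  "bet w x = w$last_idx * x$last_idx - (\<Sum>k\<in>UNIV-{last_idx}. w$k*x$k)"

lemma q_expand:
  "q (w - t *\<^sub>R x) = q w - 2*t*bet w x + t^2 * q x"
  unfolding q_def bet_def
  by (simp add: power2_eq_square algebra_simps sum.distrib sum_subtractf sum_distrib_left)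

lemma bet_add: "bet (w + s *\<^sub>R y) x = bet w x + s * bet y x"
  unfolding bet_def by (simp add: algebra_simps sum.distrib sum_subtractf sum_distrib_left)

lemma q_cont: "continuous_on UNIV (q :: real ^ 'n::{finite,wellorder} \<Rightarrow> real)"
  unfolding q_def[abs_def] by (intro continuous_intros)

theorem proposition4p1:
  fixes \<phi> :: "real ^ 'n::{finite,wellorder} \<Rightarrow> real ^ 'n::{finite,wellorder}"
    and a x :: "real ^ 'n::{finite,wellorder}"
  assumes "CARD('n) \<ge> 4"
    and "continuous_on UNIV \<phi>"
    and "coherency_preserver \<phi>"
    and "x \<noteq> 0" and "q x = 0"
    and "\<forall>t::real. \<phi> (a + t *\<^sub>R x) = \<phi> a"
  shows "degenerate \<phi>"
proof -
  have key: "q (\<phi> m - \<phi> a) = 0" if nz: "bet (m - a) x \<noteq> 0" for m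
  proof -
    define t where "t = q (m - a) / (2 * bet (m - a) x)"
    have "q ((m - a) - t *\<^sub>R x) = 0"
      unfolding q_expand using nz assms(5) by (simp add: t_def)
    moreover have "(m - a) - t *\<^sub>R x = m - (a + t *\<^sub>R x)" by (simp add: algebra_simps)
    ultimately have "q (m - (a + t *\<^sub>R x)) = 0" by simp
    hence "q (\<phi> m - \<phi> (a + t *\<^sub>R x)) = 0"
      using assms(3) unfolding coherency_preserver_def by blast
    thus ?thesis using assms(6) by simp
  qed
  define y :: "real ^ 'n::{finite,wellorder}" where "y = (\<chi> i. if i = last_idx then x$last_idx else - x$i)"
  have "bet y x = (\<Sum>k\<in>UNIV. (x$k)^2)"
  proof -
    have "bet y x = (x$last_idx)^2 + (\<Sum>k\<in>UNIV-{last_idx}. (x$k)^2)"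
      unfolding bet_def y_def by (simp add: power2_eq_square sum_negf)
    also have "\<dots> = (\<Sum>k\<in>UNIV. (x$k)^2)"
      using sum.remove[of UNIV last_idx "\<lambda>k. (x$k)^2"] by simp
    finally show ?thesis .
  qed
  moreover have "(\<Sum>k\<in>UNIV. (x$k)^2) > 0"
  proof -
    obtain i where "x$i \<noteq> 0" using assms(4) by (metis vec_eq_iff zero_index)
    hence "(x$i)^2 > 0" by simp
    moreover have "(x$i)^2 \<le> (\<Sum>k\<in>UNIV. (x$k)^2)"
      by (rule member_le_sum) auto
    ultimately show ?thesis by linarith
  qed
  ultimately have yx: "bet y x \<noteq> 0" by simp
  have "q (\<phi> m - \<phi> a) = 0" for m
  proof (cases "bet (m - a) x = 0")
    case False thus ?thesis using key by blast
  next
    case True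
    define g where "g s = q (\<phi> (m + s *\<^sub>R y) - \<phi> a)" for s :: real
    have gc: "continuous_on UNIV g"
    proof -
      have c1: "continuous_on UNIV (\<lambda>s::real. m + s *\<^sub>R y)" by (intro continuous_intros)
      have c2: "continuous_on UNIV (\<lambda>s::real. \<phi> (m + s *\<^sub>R y))"
        using continuous_on_compose[OF c1 continuous_on_subset[OF assms(2) subset_UNIV]] by (simp add: o_def)
      have c3: "continuous_on UNIV (\<lambda>s::real. \<phi> (m + s *\<^sub>R y) - \<phi> a)"
        using c2 by (intro continuous_intros)
      show ?thesis
        using continuous_on_compose[OF c3 continuous_on_subset[OF q_cont subset_UNIV]] unfolding g_def[abs_def] o_def .
    qed
    hence "(g \<longlongrightarrow> g 0) (at 0)"
      by (simp add: continuous_on_def)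
    moreover have "eventually (\<lambda>s. g s = 0) (at (0::real))"
    proof -
      have "g s = 0" if "s \<noteq> 0" for s
      proof -
        have "bet (m + s *\<^sub>R y - a) x = s * bet y x"
          using bet_add[of "m - a" s y x] True by (simp add: algebra_simps)
        hence "bet (m + s *\<^sub>R y - a) x \<noteq> 0" using that yx by simp
        thus ?thesis unfolding g_def by (rule key)
      qed
      thus ?thesis by (simp add: eventually_at_filter)
    qed
    hence "(g \<longlongrightarrow> 0) (at 0)" by (simp add: tendsto_eventually)
    ultimately have "g 0 = 0" by (rule tendsto_unique[OF trivial_limit_at])
    thus ?thesis by (simp add: g_def)
  qed
  thus ?thesis unfolding degenerate_def lightcone_def by blast
qed

end
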